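(* For $n\ge1$ let $X_n=(-1/n,1/n)\subseteq\mathbb R$ and let $X$ be the pro-set given by the inverse system $(X_n)_{n\ge1}$ with inclusion maps. Then $X$ carries the structure of an abelian group object in $\operatorname{Pro}(\mathbf{Set})$ with neutral element given by $0\in X_n$, inverse given levelwise by $x\mapsto-x$ on $X_n$, and addition $X\times X\to X$ given at index $n$ by $X_{2n}\times X_{2n}\to X_n$, $(x,y)\mapsto x+y$. This group object is nontrivial, but every homomorphism of group objects $G\to X$ in $\operatorname{Pro}(\mathbf{Set})$ from (the image of) a pro-group $G$ is trivial. In particular, $X$ is not isomorphic to the image of any pro-group, so the canonical functor $\operatorname{Pro}(\mathbf{Grp})\to\mathrm{Grp}(\operatorname{Pro}(\mathbf{Set}))$ is not an equivalence.
   Context: For a category $\mathcal C$, $\operatorname{Pro}(\mathcal C)$ is its pro-completion: objects are inverse systems, i.e. functors $X\colon \mathcal I_X^{op}\to\mathcal C$ with $\mathcal I_X$ a small filtered category, and $\operatorname{Hom}_{\operatorname{Pro}(\mathcal C)}(X,Y)=\varprojlim_{j\in\mathcal I_Y}\varinjlim_{i\in\mathcal I_X}\mathcal C(X_i,Y_j)$. $\mathrm{Grp}(\mathcal D)$ is the category of group objects in a category $\mathcal D$ with finite products; the canonical functor $\operatorname{Pro}(\mathbf{Grp})\to\mathrm{Grp}(\operatorname{Pro}(\mathbf{Set}))$ uses levelwise operations. *)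

theory Defs
  imports Complex_Main "HOL-Algebra.Group"
begin

text \<open>A small category: objects of type 'o, arrows of type 'a.
  cCmp C g f is the composite g o f (defined when cCod C f = cDom C g).\<close>
record ('o, 'a) cat =
  cOb  :: "'o set"
  cAr  :: "'a set"
  cDom :: "'a \<Rightarrow> 'o"
  cCod :: "'a \<Rightarrow> 'o"
  cId  :: "'o \<Rightarrow> 'a"
  cCmp :: "'a \<Rightarrow> 'a \<Rightarrow> 'a"

definition arrs :: "('o, 'a) cat \<Rightarrow> 'o \<Rightarrow> 'o \<Rightarrow> 'a set" where
  "arrs C i j = {u \<in> cAr C. cDom C u = i \<and> cCod C u = j}"

definition category :: "('o, 'a) cat \<Rightarrow> bool" where
  "category C \<longleftrightarrow>
     (\<forall>u\<in>cAr C. cDom C u \<in> cOb C \<and> cCod C u \<in> cOb C) \<and>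
     (\<forall>i\<in>cOb C. cId C i \<in> arrs C i i) \<and>
     (\<forall>f\<in>cAr C. \<forall>g\<in>cAr C. cCod C f = cDom C g \<longrightarrow>
         cCmp C g f \<in> arrs C (cDom C f) (cCod C g)) \<and>
     (\<forall>u\<in>cAr C. cCmp C u (cId C (cDom C u)) = u \<and> cCmp C (cId C (cCod C u)) u = u) \<and>
     (\<forall>f\<in>cAr C. \<forall>g\<in>cAr C. \<forall>h\<in>cAr C. cCod C f = cDom C g \<longrightarrow> cCod C g = cDom C h \<longrightarrow>
         cCmp C h (cCmp C g f) = cCmp C (cCmp C h g) f)"

definition filtered_cat :: "('o, 'a) cat \<Rightarrow> bool" where
  "filtered_cat C \<longleftrightarrow> category C \<and> cOb C \<noteq> {} \<and>
     (\<forall>i\<in>cOb C. \<forall>j\<in>cOb C. \<exists>k\<in>cOb C. arrs C i k \<noteq> {} \<and> arrs C j k \<noteq> {}) \<and>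
     (\<forall>i\<in>cOb C. \<forall>j\<in>cOb C. \<forall>u\<in>arrs C i j. \<forall>v\<in>arrs C i j.
         \<exists>k\<in>cOb C. \<exists>w\<in>arrs C j k. cCmp C w u = cCmp C w v)"

section \<open>Pro-sets: functors I^op -> Set with I small filtered\<close>

text \<open>pFib X i is the set X_i; for an arrow u : i -> j of I, pTr X u is the
  transition map X_j -> X_i.\<close>
record ('o, 'a, 'x) proset =
  pIdx :: "('o, 'a) cat"
  pFib :: "'o \<Rightarrow> 'x set"
  pTr  :: "'a \<Rightarrow> 'x \<Rightarrow> 'x"

definition pro_set :: "('o, 'a, 'x) proset \<Rightarrow> bool" where
  "pro_set X \<longleftrightarrow> filtered_cat (pIdx X) \<and>
     (\<forall>u\<in>cAr (pIdx X). pTr X u \<in> pFib X (cCod (pIdx X) u) \<rightarrow> pFib X (cDom (pIdx X) u)) \<and>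
     (\<forall>i\<in>cOb (pIdx X). \<forall>x\<in>pFib X i. pTr X (cId (pIdx X) i) x = x) \<and>
     (\<forall>f\<in>cAr (pIdx X). \<forall>g\<in>cAr (pIdx X). cCod (pIdx X) f = cDom (pIdx X) g \<longrightarrow>
        (\<forall>x\<in>pFib X (cCod (pIdx X) g).
           pTr X (cCmp (pIdx X) g f) x = pTr X f (pTr X g x)))"

text \<open>Equality of germs in colim_i Set(X_i, T): representatives (i,f), (i',f').\<close>
definition germ_eq :: "('o, 'a, 'x) proset \<Rightarrow> 'o \<times> ('x \<Rightarrow> 'y) \<Rightarrow> 'o \<times> ('x \<Rightarrow> 'y) \<Rightarrow> bool" where
  "germ_eq X r s \<longleftrightarrow> (\<exists>k\<in>cOb (pIdx X). \<exists>u\<in>arrs (pIdx X) (fst r) k. \<exists>v\<in>arrs (pIdx X) (fst s) k.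
       \<forall>x\<in>pFib X k. snd r (pTr X u x) = snd s (pTr X v x))"

text \<open>A morphism X -> Y in Pro(Set), i.e. an element of lim_j colim_i Set(X_i,Y_j),
  given by a choice of representative (i_j, f_j : X_(i_j) -> Y_j) for each j,
  compatible with the transition maps of Y up to germ equality.\<close>
definition pro_hom :: "('ox, 'ax, 'x) proset \<Rightarrow> ('oy, 'ay, 'y) proset \<Rightarrow> ('oy \<Rightarrow> 'ox \<times> ('x \<Rightarrow> 'y)) \<Rightarrow> bool" where
  "pro_hom X Y \<phi> \<longleftrightarrow>
     (\<forall>j\<in>cOb (pIdx Y). fst (\<phi> j) \<in> cOb (pIdx X) \<and> snd (\<phi> j) \<in> pFib X (fst (\<phi> j)) \<rightarrow> pFib Y j) \<and>
     (\<forall>w\<in>cAr (pIdx Y). germ_eq X (fst (\<phi> (cCod (pIdx Y) w)), pTr Y w \<circ> snd (\<phi> (cCod (pIdx Y) w)))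
                                   (\<phi> (cDom (pIdx Y) w)))"

definition pro_eq :: "('ox, 'ax, 'x) proset \<Rightarrow> ('oy, 'ay, 'y) proset \<Rightarrow> ('oy \<Rightarrow> 'ox \<times> ('x \<Rightarrow> 'y)) \<Rightarrow> ('oy \<Rightarrow> 'ox \<times> ('x \<Rightarrow> 'y)) \<Rightarrow> bool" where
  "pro_eq X Y \<phi> \<psi> \<longleftrightarrow> (\<forall>j\<in>cOb (pIdx Y). germ_eq X (\<phi> j) (\<psi> j))"

definition pro_id :: "'o \<Rightarrow> 'o \<times> ('x \<Rightarrow> 'x)" where
  "pro_id = (\<lambda>i. (i, id))"

definition pro_comp :: "('oz \<Rightarrow> 'oy \<times> ('y \<Rightarrow> 'z)) \<Rightarrow> ('oy \<Rightarrow> 'ox \<times> ('x \<Rightarrow> 'y)) \<Rightarrow> ('oz \<Rightarrow> 'ox \<times> ('x \<Rightarrow> 'z))" where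
  "pro_comp \<psi> \<phi> = (\<lambda>k. (fst (\<phi> (fst (\<psi> k))), snd (\<psi> k) \<circ> snd (\<phi> (fst (\<psi> k)))))"

definition unit_cat :: "(unit, unit) cat" where
  "unit_cat = \<lparr>cOb = {()}, cAr = {()}, cDom = (\<lambda>_. ()), cCod = (\<lambda>_. ()),
               cId = (\<lambda>_. ()), cCmp = (\<lambda>_ _. ())\<rparr>"

definition pro_one :: "(unit, unit, unit) proset" where
  "pro_one = \<lparr>pIdx = unit_cat, pFib = (\<lambda>_. {()}), pTr = (\<lambda>_ x. x)\<rparr>"

definition pro_bang :: "('o, 'a, 'x) proset \<Rightarrow> unit \<Rightarrow> 'o \<times> ('x \<Rightarrow> unit)" where
  "pro_bang X = (\<lambda>_. (SOME i. i \<in> cOb (pIdx X), \<lambda>_. ()))"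

definition cat_prod :: "('o1, 'a1) cat \<Rightarrow> ('o2, 'a2) cat \<Rightarrow> ('o1 \<times> 'o2, 'a1 \<times> 'a2) cat" where
  "cat_prod C D = \<lparr>cOb = cOb C \<times> cOb D, cAr = cAr C \<times> cAr D,
     cDom = map_prod (cDom C) (cDom D), cCod = map_prod (cCod C) (cCod D),
     cId = (\<lambda>p. (cId C (fst p), cId D (snd p))),
     cCmp = (\<lambda>g f. (cCmp C (fst g) (fst f), cCmp D (snd g) (snd f)))\<rparr>"

definition pro_prod :: "('o1, 'a1, 'x) proset \<Rightarrow> ('o2, 'a2, 'y) proset \<Rightarrow> ('o1 \<times> 'o2, 'a1 \<times> 'a2, 'x \<times> 'y) proset" where
  "pro_prod X Y = \<lparr>pIdx = cat_prod (pIdx X) (pIdx Y),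
     pFib = (\<lambda>p. pFib X (fst p) \<times> pFib Y (snd p)),
     pTr = (\<lambda>u. map_prod (pTr X (fst u)) (pTr Y (snd u)))\<rparr>"

definition pro_fst :: "('o1, 'a1, 'x) proset \<Rightarrow> ('o2, 'a2, 'y) proset \<Rightarrow> 'o1 \<Rightarrow> ('o1 \<times> 'o2) \<times> ('x \<times> 'y \<Rightarrow> 'x)" where
  "pro_fst X Y = (\<lambda>i. ((i, SOME j. j \<in> cOb (pIdx Y)), fst))"

definition pro_snd :: "('o1, 'a1, 'x) proset \<Rightarrow> ('o2, 'a2, 'y) proset \<Rightarrow> 'o2 \<Rightarrow> ('o1 \<times> 'o2) \<times> ('x \<times> 'y \<Rightarrow> 'y)" where
  "pro_snd X Y = (\<lambda>j. ((SOME i. i \<in> cOb (pIdx X), j), snd))"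

definition pro_pair :: "('oz, 'az, 'z) proset \<Rightarrow> ('ox \<Rightarrow> 'oz \<times> ('z \<Rightarrow> 'x)) \<Rightarrow> ('oy \<Rightarrow> 'oz \<times> ('z \<Rightarrow> 'y))
     \<Rightarrow> ('ox \<times> 'oy \<Rightarrow> 'oz \<times> ('z \<Rightarrow> 'x \<times> 'y))" where
  "pro_pair Z \<phi> \<psi> = (\<lambda>p.
     let i = fst p; j = snd p;
         c = (SOME c. fst c \<in> cOb (pIdx Z) \<and> fst (snd c) \<in> arrs (pIdx Z) (fst (\<phi> i)) (fst c)
                      \<and> snd (snd c) \<in> arrs (pIdx Z) (fst (\<psi> j)) (fst c))
     in (fst c, \<lambda>z. (snd (\<phi> i) (pTr Z (fst (snd c)) z), snd (\<psi> j) (pTr Z (snd (snd c)) z))))"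

definition pro_prod_map :: "('o1, 'a1, 'x) proset \<Rightarrow> ('o2, 'a2, 'y) proset
     \<Rightarrow> ('o3 \<Rightarrow> 'o1 \<times> ('x \<Rightarrow> 'x')) \<Rightarrow> ('o4 \<Rightarrow> 'o2 \<times> ('y \<Rightarrow> 'y'))
     \<Rightarrow> ('o3 \<times> 'o4 \<Rightarrow> ('o1 \<times> 'o2) \<times> ('x \<times> 'y \<Rightarrow> 'x' \<times> 'y'))" where
  "pro_prod_map X Y f g = pro_pair (pro_prod X Y) (pro_comp f (pro_fst X Y)) (pro_comp g (pro_snd X Y))"

definition pro_assoc :: "('o, 'a, 'x) proset \<Rightarrow> ('o \<times> ('o \<times> 'o) \<Rightarrow> (('o \<times> 'o) \<times> 'o) \<times> (('x \<times> 'x) \<times> 'x \<Rightarrow> 'x \<times> ('x \<times> 'x)))" where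
  "pro_assoc X = pro_pair (pro_prod (pro_prod X X) X)
      (pro_comp (pro_fst X X) (pro_fst (pro_prod X X) X))
      (pro_pair (pro_prod (pro_prod X X) X)
         (pro_comp (pro_snd X X) (pro_fst (pro_prod X X) X))
         (pro_snd (pro_prod X X) X))"

definition pro_swap :: "('o, 'a, 'x) proset \<Rightarrow> ('o \<times> 'o \<Rightarrow> ('o \<times> 'o) \<times> ('x \<times> 'x \<Rightarrow> 'x \<times> 'x))" where
  "pro_swap X = pro_pair (pro_prod X X) (pro_snd X X) (pro_fst X X)"

definition group_obj :: "('o, 'a, 'x) proset \<Rightarrow> ('o \<Rightarrow> unit \<times> (unit \<Rightarrow> 'x)) \<Rightarrow> ('o \<Rightarrow> 'o \<times> ('x \<Rightarrow> 'x))
     \<Rightarrow> ('o \<Rightarrow> ('o \<times> 'o) \<times> ('x \<times> 'x \<Rightarrow> 'x)) \<Rightarrow> bool" where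
  "group_obj X e iv m \<longleftrightarrow> pro_set X \<and>
     pro_hom pro_one X e \<and> pro_hom X X iv \<and> pro_hom (pro_prod X X) X m \<and>
     pro_eq (pro_prod (pro_prod X X) X) X
        (pro_comp m (pro_prod_map (pro_prod X X) X m pro_id))
        (pro_comp m (pro_comp (pro_prod_map X (pro_prod X X) pro_id m) (pro_assoc X))) \<and>
     pro_eq X X (pro_comp m (pro_pair X (pro_comp e (pro_bang X)) pro_id)) pro_id \<and>
     pro_eq X X (pro_comp m (pro_pair X pro_id (pro_comp e (pro_bang X)))) pro_id \<and>
     pro_eq X X (pro_comp m (pro_pair X iv pro_id)) (pro_comp e (pro_bang X)) \<and>
     pro_eq X X (pro_comp m (pro_pair X pro_id iv)) (pro_comp e (pro_bang X))"

definition abelian_group_obj :: "('o, 'a, 'x) proset \<Rightarrow> ('o \<Rightarrow> unit \<times> (unit \<Rightarrow> 'x)) \<Rightarrow> ('o \<Rightarrow> 'o \<times> ('x \<Rightarrow> 'x))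
     \<Rightarrow> ('o \<Rightarrow> ('o \<times> 'o) \<times> ('x \<times> 'x \<Rightarrow> 'x)) \<Rightarrow> bool" where
  "abelian_group_obj X e iv m \<longleftrightarrow> group_obj X e iv m \<and>
     pro_eq (pro_prod X X) X (pro_comp m (pro_swap X)) m"

definition grp_obj_hom :: "('o1, 'a1, 'x) proset \<Rightarrow> ('o1 \<Rightarrow> ('o1 \<times> 'o1) \<times> ('x \<times> 'x \<Rightarrow> 'x))
     \<Rightarrow> ('o2, 'a2, 'y) proset \<Rightarrow> ('o2 \<Rightarrow> ('o2 \<times> 'o2) \<times> ('y \<times> 'y \<Rightarrow> 'y))
     \<Rightarrow> ('o2 \<Rightarrow> 'o1 \<times> ('x \<Rightarrow> 'y)) \<Rightarrow> bool" where
  "grp_obj_hom G mG H mH \<phi> \<longleftrightarrow> pro_hom G H \<phi> \<and>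
     pro_eq (pro_prod G G) H (pro_comp \<phi> mG) (pro_comp mH (pro_prod_map G G \<phi> \<phi>))"

definition grp_obj_iso :: "('o1, 'a1, 'x) proset \<Rightarrow> ('o1 \<Rightarrow> ('o1 \<times> 'o1) \<times> ('x \<times> 'x \<Rightarrow> 'x))
     \<Rightarrow> ('o2, 'a2, 'y) proset \<Rightarrow> ('o2 \<Rightarrow> ('o2 \<times> 'o2) \<times> ('y \<times> 'y \<Rightarrow> 'y)) \<Rightarrow> bool" where
  "grp_obj_iso G mG H mH \<longleftrightarrow> (\<exists>\<phi> \<psi>. grp_obj_hom G mG H mH \<phi> \<and> grp_obj_hom H mH G mG \<psi> \<and>
      pro_eq G G (pro_comp \<psi> \<phi>) pro_id \<and> pro_eq H H (pro_comp \<phi> \<psi>) pro_id)"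

definition pro_group :: "('o, 'a, 'x) proset \<Rightarrow> ('o \<Rightarrow> 'x monoid) \<Rightarrow> bool" where
  "pro_group X grp \<longleftrightarrow> pro_set X \<and>
     (\<forall>i\<in>cOb (pIdx X). group (grp i) \<and> carrier (grp i) = pFib X i) \<and>
     (\<forall>u\<in>cAr (pIdx X). pTr X u \<in> hom (grp (cCod (pIdx X) u)) (grp (cDom (pIdx X) u)))"

definition pg_mult :: "('o \<Rightarrow> 'x monoid) \<Rightarrow> 'o \<Rightarrow> ('o \<times> 'o) \<times> ('x \<times> 'x \<Rightarrow> 'x)" where
  "pg_mult grp = (\<lambda>i. ((i, i), \<lambda>p. fst p \<otimes>\<^bsub>grp i\<^esub> snd p))"

definition pg_one :: "('o \<Rightarrow> 'x monoid) \<Rightarrow> 'o \<Rightarrow> unit \<times> (unit \<Rightarrow> 'x)" where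
  "pg_one grp = (\<lambda>i. ((), \<lambda>_. \<one>\<^bsub>grp i\<^esub>))"

definition pg_inv :: "('o \<Rightarrow> 'x monoid) \<Rightarrow> 'o \<Rightarrow> 'o \<times> ('x \<Rightarrow> 'x)" where
  "pg_inv grp = (\<lambda>i. (i, \<lambda>x. inv\<^bsub>grp i\<^esub> x))"

definition nat_pos_cat :: "(nat, nat \<times> nat) cat" where
  "nat_pos_cat = \<lparr>cOb = {n. 1 \<le> n}, cAr = {(m, n). 1 \<le> m \<and> m \<le> n},
     cDom = fst, cCod = snd, cId = (\<lambda>n. (n, n)), cCmp = (\<lambda>g f. (fst f, snd g))\<rparr>"

definition realX :: "(nat, nat \<times> nat, real) proset" where
  "realX = \<lparr>pIdx = nat_pos_cat, pFib = (\<lambda>n. {-1 / real n <..< 1 / real n}), pTr = (\<lambda>_ x. x)\<rparr>"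

definition realX_zero :: "nat \<Rightarrow> unit \<times> (unit \<Rightarrow> real)" where
  "realX_zero = (\<lambda>n. ((), \<lambda>_. 0))"

definition realX_neg :: "nat \<Rightarrow> nat \<times> (real \<Rightarrow> real)" where
  "realX_neg = (\<lambda>n. (n, \<lambda>x. - x))"

definition realX_add :: "nat \<Rightarrow> (nat \<times> nat) \<times> (real \<times> real \<Rightarrow> real)" where
  "realX_add = (\<lambda>n. ((2 * n, 2 * n), \<lambda>p. fst p + snd p))"

end

theory Submission
  imports Defs
begin

definition directed :: "('o,'a) cat \<Rightarrow> bool" where
  "directed C \<longleftrightarrow> (\<forall>i\<in>cOb C. \<forall>j\<in>cOb C. \<exists>k\<in>cOb C. arrs C i k \<noteq> {} \<and> arrs C j k \<noteq> {})"

definition wfm :: "('oy,'ay,'y) proset \<Rightarrow> ('ox,'ax,'x) proset \<Rightarrow> ('oy \<Rightarrow> 'ox \<times> ('x\<Rightarrow>'y)) \<Rightarrow> bool" where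
  "wfm Y X \<phi> \<longleftrightarrow> (\<forall>j\<in>cOb (pIdx Y). fst (\<phi> j) \<in> cOb (pIdx X))"

lemma arrs_prod: "arrs (cat_prod C D) (a,b) (c,d) = arrs C a c \<times> arrs D b d"
  by (auto simp: arrs_def cat_prod_def)

lemma cOb_prod[simp]: "cOb (cat_prod C D) = cOb C \<times> cOb D"
  by (simp add: cat_prod_def)

lemma pro_prod_simps[simp]: "pIdx (pro_prod X Y) = cat_prod (pIdx X) (pIdx Y)"
  "pFib (pro_prod X Y) p = pFib X (fst p) \<times> pFib Y (snd p)"
  "pTr (pro_prod X Y) u = map_prod (pTr X (fst u)) (pTr Y (snd u))"
  by (simp_all add: pro_prod_def)

lemma map_prod_id_id[simp]: "map_prod id id = id"
  by (auto simp: fun_eq_iff)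

lemma realX_simps[simp]: "pIdx realX = nat_pos_cat" "pFib realX n = {-1 / real n <..< 1 / real n}"
  "pTr realX u = id"
  by (auto simp: realX_def)

lemma nat_ob[simp]: "cOb nat_pos_cat = {n. 1 \<le> n}"
  by (simp add: nat_pos_cat_def)

lemma arrs_nat: "arrs nat_pos_cat i k = (if 1 \<le> i \<and> i \<le> k then {(i,k)} else {})"
  by (auto simp: arrs_def nat_pos_cat_def)

lemma directed_prod: "directed C \<Longrightarrow> directed D \<Longrightarrow> directed (cat_prod C D)"
  unfolding directed_def
  apply (clarsimp simp: arrs_prod)
  by (metis (no_types, lifting) Sigma_empty1 Sigma_empty2 arrs_prod)

lemma directed_nat: "directed nat_pos_cat"
  unfolding directed_def
  by (clarsimp simp: arrs_nat) (rule_tac x="max i j" in exI, auto)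

lemma filtered_directed: "filtered_cat C \<Longrightarrow> directed C"
  by (simp add: filtered_cat_def directed_def)

lemma germ_triv:
  assumes "\<And>u. pTr X u = id" "directed (pIdx X)" "fst r \<in> cOb (pIdx X)" "fst s \<in> cOb (pIdx X)"
    "snd r = snd s"
  shows "germ_eq X r s"
proof -
  obtain k where "k \<in> cOb (pIdx X)" "arrs (pIdx X) (fst r) k \<noteq> {}" "arrs (pIdx X) (fst s) k \<noteq> {}"
    using assms(2-4) unfolding directed_def by blast
  then show ?thesis unfolding germ_eq_def using assms(1,5) by fastforce
qed

lemma pro_eq_triv:
  assumes "\<And>u. pTr X u = id" "directed (pIdx X)" "wfm Y X \<phi>" "wfm Y X \<psi>"
    "\<And>j. j \<in> cOb (pIdx Y) \<Longrightarrow> snd (\<phi> j) = snd (\<psi> j)"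
  shows "pro_eq X Y \<phi> \<psi>"
  unfolding pro_eq_def using assms by (auto simp: wfm_def intro!: germ_triv)

lemma pair_snd: "(\<And>u. pTr Z u = id) \<Longrightarrow>
   snd (pro_pair Z \<phi> \<psi> p) = (\<lambda>z. (snd (\<phi> (fst p)) z, snd (\<psi> (snd p)) z))"
  by (simp add: pro_pair_def Let_def)

lemma pair_spec:
  assumes "directed (pIdx Z)" "fst (\<phi> i) \<in> cOb (pIdx Z)" "fst (\<psi> j) \<in> cOb (pIdx Z)"
  shows "\<exists>c. pro_pair Z \<phi> \<psi> (i,j) = (fst c, \<lambda>z. (snd (\<phi> i) (pTr Z (fst (snd c)) z), snd (\<psi> j) (pTr Z (snd (snd c)) z)))
     \<and> fst c \<in> cOb (pIdx Z) \<and> fst (snd c) \<in> arrs (pIdx Z) (fst (\<phi> i)) (fst c)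
     \<and> snd (snd c) \<in> arrs (pIdx Z) (fst (\<psi> j)) (fst c)"
proof -
  let ?P = "\<lambda>c. fst c \<in> cOb (pIdx Z) \<and> fst (snd c) \<in> arrs (pIdx Z) (fst (\<phi> i)) (fst c)
                      \<and> snd (snd c) \<in> arrs (pIdx Z) (fst (\<psi> j)) (fst c)"
  obtain k a b where "k \<in> cOb (pIdx Z)" "a \<in> arrs (pIdx Z) (fst (\<phi> i)) k" "b \<in> arrs (pIdx Z) (fst (\<psi> j)) k"
    using assms unfolding directed_def by blast
  then have "?P (k,a,b)" by simp
  then have "?P (SOME c. ?P c)" by (rule someI)
  then show ?thesis unfolding pro_pair_def Let_def by (intro exI[of _ "SOME c. ?P c"]) simp
qed

lemma wfm_pair: "directed (pIdx Z) \<Longrightarrow> wfm X Z \<phi> \<Longrightarrow> wfm Y Z \<psi> \<Longrightarrow> wfm (pro_prod X Y) Z (pro_pair Z \<phi> \<psi>)"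
  unfolding wfm_def using pair_spec by fastforce

lemma wfm_comp: "wfm Z Y \<psi> \<Longrightarrow> wfm Y X \<phi> \<Longrightarrow> wfm Z X (pro_comp \<psi> \<phi>)"
  by (simp add: wfm_def pro_comp_def)

lemma wfm_id: "wfm X X pro_id"
  by (simp add: wfm_def pro_id_def)

lemma wfm_fst: "cOb (pIdx Y) \<noteq> {} \<Longrightarrow> wfm X (pro_prod X Y) (pro_fst X Y)"
  by (auto simp: wfm_def pro_fst_def intro: someI)

lemma wfm_snd: "cOb (pIdx X) \<noteq> {} \<Longrightarrow> wfm Y (pro_prod X Y) (pro_snd X Y)"
  by (auto simp: wfm_def pro_snd_def intro: someI)

lemma wfm_bang: "cOb (pIdx X) \<noteq> {} \<Longrightarrow> wfm pro_one X (pro_bang X)"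
  by (auto simp: wfm_def pro_bang_def intro: someI)

lemma filtered_nat: "filtered_cat nat_pos_cat"
  unfolding filtered_cat_def category_def
  apply (intro conjI)
  apply (auto simp: nat_pos_cat_def arrs_def)[5]
  apply force
  apply (clarsimp simp: nat_pos_cat_def arrs_def)
  apply (rule_tac x="max i j" in exI, auto)
  apply (clarsimp simp: nat_pos_cat_def arrs_def)
  apply (rule_tac x=j in exI, auto)
  done

lemma inv_le: "1 \<le> a \<Longrightarrow> a \<le> (b::nat) \<Longrightarrow> 1 / real b \<le> 1 / real a"
  by (simp add: frac_le)

lemma pro_set_realX: "pro_set realX"
  unfolding pro_set_def
  apply (intro conjI)
  apply (simp add: filtered_nat)
  apply (clarsimp simp: nat_pos_cat_def)
  subgoal for a b x using inv_le[of a b] by auto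
  apply simp
  apply (simp add: nat_pos_cat_def)
  done

lemma dir_realX: "directed (pIdx realX)" using directed_nat by simp
lemma dir_realX2: "directed (pIdx (pro_prod realX realX))" using directed_nat by (simp add: directed_prod)
lemma dir_realX3: "directed (pIdx (pro_prod (pro_prod realX realX) realX))" using directed_nat by (simp add: directed_prod)
lemma ne_realX: "cOb (pIdx realX) \<noteq> {}" by auto
lemma ne_realX2: "cOb (pIdx (pro_prod realX realX)) \<noteq> {}" by auto
lemma triv_realX2: "pTr (pro_prod realX realX) u = id" by simp
lemma triv_realX3: "pTr (pro_prod (pro_prod realX realX) realX) u = id" by simp

lemma one_simps[simp]: "pIdx pro_one = unit_cat" "pTr pro_one u = id" "pFib pro_one i = {()}"
  by (auto simp: pro_one_def)
lemma unit_ob[simp]: "cOb unit_cat = {()}" by (simp add: unit_cat_def)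
lemma dir_one: "directed (pIdx pro_one)" by (simp add: directed_def arrs_def unit_cat_def)

lemma wfm_zero: "wfm realX pro_one realX_zero" by (simp add: wfm_def realX_zero_def)
lemma wfm_neg: "wfm realX realX realX_neg" by (simp add: wfm_def realX_neg_def)
lemma wfm_add: "wfm realX (pro_prod realX realX) realX_add" by (simp add: wfm_def realX_add_def)

lemmas wfms = wfm_zero wfm_neg wfm_add wfm_comp wfm_id wfm_bang wfm_fst wfm_snd wfm_pair
   dir_realX dir_realX2 dir_realX3 ne_realX ne_realX2

lemma hom_zero: "pro_hom pro_one realX realX_zero"
  unfolding pro_hom_def realX_zero_def
  by (auto intro!: germ_triv dir_one simp: Pi_def)

lemma hom_neg: "pro_hom realX realX realX_neg"
  unfolding pro_hom_def realX_neg_def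
  by (auto intro!: germ_triv dir_realX simp: Pi_def nat_pos_cat_def)

lemma hom_add: "pro_hom (pro_prod realX realX) realX realX_add"
  unfolding pro_hom_def realX_add_def
  apply (intro conjI ballI)
   apply (auto simp: Pi_def)[1]
  subgoal for j apply (auto simp: Pi_def) done
  apply (auto intro!: germ_triv dir_realX2 simp: nat_pos_cat_def)
  done

lemma wfm_c_add: "wfm (pro_prod realX realX) X \<phi> \<Longrightarrow> wfm realX X (pro_comp realX_add \<phi>)"
  by (rule wfm_comp[OF wfm_add])
lemma wfm_c_neg: "wfm realX X \<phi> \<Longrightarrow> wfm realX X (pro_comp realX_neg \<phi>)"
  by (rule wfm_comp[OF wfm_neg])
lemma wfm_c_zero: "wfm pro_one X \<phi> \<Longrightarrow> wfm realX X (pro_comp realX_zero \<phi>)"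
  by (rule wfm_comp[OF wfm_zero])
lemma wfm_c_id: "wfm Y X \<phi> \<Longrightarrow> wfm Y X (pro_comp pro_id \<phi>)"
  by (rule wfm_comp[OF wfm_id])
lemma wfm_c_fst: "cOb (pIdx Y) \<noteq> {} \<Longrightarrow> wfm (pro_prod X Y) Z \<phi> \<Longrightarrow> wfm X Z (pro_comp (pro_fst X Y) \<phi>)"
  by (rule wfm_comp[OF wfm_fst])
lemma wfm_c_snd: "cOb (pIdx X) \<noteq> {} \<Longrightarrow> wfm (pro_prod X Y) Z \<phi> \<Longrightarrow> wfm Y Z (pro_comp (pro_snd X Y) \<phi>)"
  by (rule wfm_comp[OF wfm_snd])
lemma wfm_c_pair: "wfm (pro_prod A B) Z' (pro_pair Z' a b) \<Longrightarrow> wfm Z' Z \<phi> \<Longrightarrow> wfm (pro_prod A B) Z (pro_comp (pro_pair Z' a b) \<phi>)"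
  by (rule wfm_comp)

lemmas wfms2 = wfm_c_add wfm_c_neg wfm_c_zero wfm_c_id wfm_c_fst wfm_c_snd wfm_c_pair
   wfm_zero wfm_neg wfm_add wfm_id wfm_bang wfm_fst wfm_snd wfm_pair
   dir_realX dir_realX2 dir_realX3 ne_realX ne_realX2

lemma dir_pp: "directed (pIdx X) \<Longrightarrow> directed (pIdx Y) \<Longrightarrow> directed (pIdx (pro_prod X Y))"
  by (simp add: directed_prod)
lemma ne_pp: "cOb (pIdx X) \<noteq> {} \<Longrightarrow> cOb (pIdx Y) \<noteq> {} \<Longrightarrow> cOb (pIdx (pro_prod X Y)) \<noteq> {}"
  by simp

lemmas wfms3 = wfm_c_add wfm_c_neg wfm_c_zero wfm_c_id wfm_c_fst wfm_c_snd wfm_c_pair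
   wfm_zero wfm_neg wfm_add wfm_id wfm_bang wfm_fst wfm_snd wfm_pair
   dir_realX dir_pp ne_realX ne_pp

lemma ab_realX: "abelian_group_obj realX realX_zero realX_neg realX_add"
  unfolding abelian_group_obj_def group_obj_def pro_prod_map_def pro_assoc_def pro_swap_def
  apply (intro conjI pro_set_realX hom_zero hom_neg hom_add)
  apply (rule pro_eq_triv)
  apply simp
  apply (intro wfms3)+
  apply (simp add: pair_snd pro_comp_def realX_add_def realX_zero_def realX_neg_def pro_id_def pro_fst_def pro_snd_def pro_bang_def comp_def add_ac id_def fun_eq_iff)
  apply (rule pro_eq_triv)
  apply simp
  apply (intro wfms3)+
  apply (simp add: pair_snd pro_comp_def realX_add_def realX_zero_def realX_neg_def pro_id_def pro_fst_def pro_snd_def pro_bang_def comp_def add_ac id_def fun_eq_iff)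
  apply (rule pro_eq_triv)
  apply simp
  apply (intro wfms3)+
  apply (simp add: pair_snd pro_comp_def realX_add_def realX_zero_def realX_neg_def pro_id_def pro_fst_def pro_snd_def pro_bang_def comp_def add_ac id_def fun_eq_iff)
  apply (rule pro_eq_triv)
  apply simp
  apply (intro wfms3)+
  apply (simp add: pair_snd pro_comp_def realX_add_def realX_zero_def realX_neg_def pro_id_def pro_fst_def pro_snd_def pro_bang_def comp_def add_ac id_def fun_eq_iff)
  apply (rule pro_eq_triv)
  apply simp
  apply (intro wfms3)+
  apply (simp add: pair_snd pro_comp_def realX_add_def realX_zero_def realX_neg_def pro_id_def pro_fst_def pro_snd_def pro_bang_def comp_def add_ac id_def fun_eq_iff)
  apply (rule pro_eq_triv)
  apply simp
  apply (intro wfms3)+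
  apply (simp add: pair_snd pro_comp_def realX_add_def realX_zero_def realX_neg_def pro_id_def pro_fst_def pro_snd_def pro_bang_def comp_def add_ac id_def fun_eq_iff)
  done
lemma not_triv: "\<not> (\<exists>\<phi> \<psi>. pro_hom realX pro_one \<phi> \<and> pro_hom pro_one realX \<psi>
            \<and> pro_eq realX realX (pro_comp \<psi> \<phi>) pro_id
            \<and> pro_eq pro_one pro_one (pro_comp \<phi> \<psi>) pro_id)"
proof
  assume "\<exists>\<phi> \<psi>. pro_hom realX pro_one \<phi> \<and> pro_hom pro_one realX \<psi>
            \<and> pro_eq realX realX (pro_comp \<psi> \<phi>) pro_id
            \<and> pro_eq pro_one pro_one (pro_comp \<phi> \<psi>) pro_id"
  then obtain \<phi> :: "unit \<Rightarrow> nat \<times> (real \<Rightarrow> unit)" and \<psi> where e: "pro_eq realX realX (pro_comp \<psi> \<phi>) pro_id" by blast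
  then have "germ_eq realX (pro_comp \<psi> \<phi> 1) (pro_id 1)" by (simp add: pro_eq_def)
  then obtain k where k: "1 \<le> k" and h: "\<forall>x\<in>{-1/real k<..<1/real k}. snd (\<psi> 1) (snd (\<phi> (fst (\<psi> 1))) x) = x"
    by (auto simp: germ_eq_def pro_comp_def pro_id_def)
  have p: "0 < 1 / (2 * real k)" "1 / (2 * real k) < 1 / real k" using k by (auto simp: field_simps)
  have "snd (\<psi> 1) (snd (\<phi> (fst (\<psi> 1))) 0) = 0" using h k by auto
  moreover have "snd (\<psi> 1) (snd (\<phi> (fst (\<psi> 1))) (1 / (2 * real k))) = 1 / (2 * real k)"
  proof -
    have "1 / (2 * real k) \<in> {-1/real k<..<1/real k}" using p by auto
    then show ?thesis using h by blast
  qed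
  ultimately show False using p by simp
qed

lemma ps_cat: "pro_set G \<Longrightarrow> category (pIdx G)"
  by (simp add: pro_set_def filtered_cat_def)

lemma arr_obs: "pro_set G \<Longrightarrow> u \<in> arrs (pIdx G) i j \<Longrightarrow> i \<in> cOb (pIdx G) \<and> j \<in> cOb (pIdx G)"
  using ps_cat unfolding category_def arrs_def by blast

lemma cmp_arr: "pro_set G \<Longrightarrow> u \<in> arrs (pIdx G) i j \<Longrightarrow> w \<in> arrs (pIdx G) j k \<Longrightarrow>
   cCmp (pIdx G) w u \<in> arrs (pIdx G) i k"
  using ps_cat unfolding category_def arrs_def by force

lemma cmp_assoc: "pro_set G \<Longrightarrow> u \<in> arrs (pIdx G) i j \<Longrightarrow> v \<in> arrs (pIdx G) j k \<Longrightarrow> w \<in> arrs (pIdx G) k l \<Longrightarrow>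
   cCmp (pIdx G) w (cCmp (pIdx G) v u) = cCmp (pIdx G) (cCmp (pIdx G) w v) u"
  using ps_cat unfolding category_def arrs_def by force

lemma tr_in: "pro_set G \<Longrightarrow> u \<in> arrs (pIdx G) i j \<Longrightarrow> x \<in> pFib G j \<Longrightarrow> pTr G u x \<in> pFib G i"
  unfolding pro_set_def arrs_def by force

lemma tr_cmp: "pro_set G \<Longrightarrow> u \<in> arrs (pIdx G) i j \<Longrightarrow> w \<in> arrs (pIdx G) j k \<Longrightarrow> x \<in> pFib G k \<Longrightarrow>
   pTr G (cCmp (pIdx G) w u) x = pTr G u (pTr G w x)"
  unfolding pro_set_def arrs_def by force

lemma ub: "pro_set G \<Longrightarrow> i \<in> cOb (pIdx G) \<Longrightarrow> j \<in> cOb (pIdx G) \<Longrightarrow>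
  \<exists>k a b. k \<in> cOb (pIdx G) \<and> a \<in> arrs (pIdx G) i k \<and> b \<in> arrs (pIdx G) j k"
proof -
  assume a: "pro_set G" "i \<in> cOb (pIdx G)" "j \<in> cOb (pIdx G)"
  then obtain k where "k \<in> cOb (pIdx G)" "arrs (pIdx G) i k \<noteq> {}" "arrs (pIdx G) j k \<noteq> {}"
    unfolding pro_set_def filtered_cat_def by blast
  then show ?thesis by blast
qed

lemma eqz: "pro_set G \<Longrightarrow> u \<in> arrs (pIdx G) i j \<Longrightarrow> v \<in> arrs (pIdx G) i j \<Longrightarrow>
  \<exists>k w. k \<in> cOb (pIdx G) \<and> w \<in> arrs (pIdx G) j k \<and> cCmp (pIdx G) w u = cCmp (pIdx G) w v"
proof -
  assume a: "pro_set G" "u \<in> arrs (pIdx G) i j" "v \<in> arrs (pIdx G) i j"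
  then have "i \<in> cOb (pIdx G)" "j \<in> cOb (pIdx G)" using arr_obs[OF a(1,2)] by auto
  then show ?thesis using a unfolding pro_set_def filtered_cat_def by blast
qed

lemma join: assumes "pro_set G" "u \<in> arrs (pIdx G) i a" "v \<in> arrs (pIdx G) i b"
  shows "\<exists>k t1 t2. k \<in> cOb (pIdx G) \<and> t1 \<in> arrs (pIdx G) a k \<and> t2 \<in> arrs (pIdx G) b k
     \<and> cCmp (pIdx G) t1 u = cCmp (pIdx G) t2 v"
proof -
  obtain k0 p q where k0: "k0 \<in> cOb (pIdx G)" "p \<in> arrs (pIdx G) a k0" "q \<in> arrs (pIdx G) b k0"
    using ub[OF assms(1)] arr_obs[OF assms(1)] assms(2,3) by meson
  have "cCmp (pIdx G) p u \<in> arrs (pIdx G) i k0" "cCmp (pIdx G) q v \<in> arrs (pIdx G) i k0"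
    using cmp_arr[OF assms(1)] assms k0 by blast+
  then obtain k w where kw: "k \<in> cOb (pIdx G)" "w \<in> arrs (pIdx G) k0 k"
     "cCmp (pIdx G) w (cCmp (pIdx G) p u) = cCmp (pIdx G) w (cCmp (pIdx G) q v)"
    using eqz[OF assms(1)] by blast
  show ?thesis
    apply (rule exI[of _ k], rule exI[of _ "cCmp (pIdx G) w p"], rule exI[of _ "cCmp (pIdx G) w q"])
    using kw k0 assms cmp_arr[OF assms(1)] cmp_assoc[OF assms(1)] by metis
qed

lemma tr_mult: "pro_group G grp \<Longrightarrow> u \<in> arrs (pIdx G) i j \<Longrightarrow> x \<in> pFib G j \<Longrightarrow> y \<in> pFib G j \<Longrightarrow>
   pTr G u (x \<otimes>\<^bsub>grp j\<^esub> y) = pTr G u x \<otimes>\<^bsub>grp i\<^esub> pTr G u y"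
proof -
  assume a: "pro_group G grp" "u \<in> arrs (pIdx G) i j" "x \<in> pFib G j" "y \<in> pFib G j"
  then have ps: "pro_set G" by (simp add: pro_group_def)
  have h: "pTr G u \<in> hom (grp j) (grp i)" using a unfolding pro_group_def arrs_def by auto
  have "j \<in> cOb (pIdx G)" using arr_obs[OF ps a(2)] by simp
  then have "carrier (grp j) = pFib G j" using a(1) unfolding pro_group_def by auto
  then show ?thesis using hom_mult[OF h] a by simp
qed

lemma bounded_hom_zero:
  assumes "group H" and add: "\<And>x y. x \<in> carrier H \<Longrightarrow> y \<in> carrier H \<Longrightarrow> F (x \<otimes>\<^bsub>H\<^esub> y) = F x + F y"
    and bd: "\<And>x. x \<in> carrier H \<Longrightarrow> \<bar>F x\<bar> < (B::real)" and x: "x \<in> carrier H"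
  shows "F x = 0"
proof (rule ccontr)
  assume ne: "F x \<noteq> 0"
  have pw: "F (x [^]\<^bsub>H\<^esub> (m::nat)) = real m * F x" for m
  proof (induction m)
    case 0
    have "F \<one>\<^bsub>H\<^esub> = F \<one>\<^bsub>H\<^esub> + F \<one>\<^bsub>H\<^esub>"
      using add[of "\<one>\<^bsub>H\<^esub>" "\<one>\<^bsub>H\<^esub>"] assms(1) by (metis group.is_monoid monoid.l_one monoid.one_closed)
    then show ?case by simp
  next
    case (Suc m)
    have "F (x [^]\<^bsub>H\<^esub> Suc m) = F (x [^]\<^bsub>H\<^esub> m \<otimes>\<^bsub>H\<^esub> x)"
      using assms(1) by (simp add: group.is_monoid monoid.nat_pow_Suc)
    also have "\<dots> = F (x [^]\<^bsub>H\<^esub> m) + F x" using add x assms(1) by (simp add: group.is_monoid monoid.nat_pow_closed)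
    finally show ?case using Suc by (simp add: algebra_simps)
  qed
  obtain m :: nat where m: "B / \<bar>F x\<bar> < real m" using reals_Archimedean2 by blast
  have "B < real m * \<bar>F x\<bar>" using m ne by (simp add: field_simps)
  moreover have "\<bar>F (x [^]\<^bsub>H\<^esub> m)\<bar> < B" using bd x assms(1) by (simp add: group.is_monoid monoid.nat_pow_closed)
  ultimately show False using pw[of m] by (simp add: abs_mult)
qed

lemma core:
  fixes f f' :: "'x \<Rightarrow> real"
  assumes G: "pro_group G grp"
  and fb: "\<forall>x\<in>pFib G i. \<bar>f x\<bar> < B"
  and u1: "u1 \<in> arrs (pIdx G) i k1" and u2: "u2 \<in> arrs (pIdx G) i k2"
  and al: "\<alpha> \<in> arrs (pIdx G) i' k1" and be: "\<beta> \<in> arrs (pIdx G) i' k2"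
  and E: "\<forall>g\<in>pFib G k1. \<forall>h\<in>pFib G k2. f (pTr G u1 g \<otimes>\<^bsub>grp i\<^esub> pTr G u2 h) = f' (pTr G \<alpha> g) + f' (pTr G \<beta> h)"
  and r: "r \<in> arrs (pIdx G) i' k3" and s: "s \<in> arrs (pIdx G) i k3"
  and R: "\<forall>x\<in>pFib G k3. f' (pTr G r x) = f (pTr G s x)"
  shows "\<exists>K P. K \<in> cOb (pIdx G) \<and> P \<in> arrs (pIdx G) i K \<and> (\<forall>x\<in>pFib G K. f (pTr G P x) = 0)"
proof -
  let ?C = "pIdx G"
  have ps: "pro_set G" using G by (simp add: pro_group_def)
  obtain K t1 t2 where K: "K \<in> cOb ?C" "t1 \<in> arrs ?C k1 K" "t2 \<in> arrs ?C k2 K"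
      and eqP: "cCmp ?C t1 u1 = cCmp ?C t2 u2"
    using join[OF ps u1 u2] by blast
  define P where "P = cCmp ?C t1 u1"
  have P: "P \<in> arrs ?C i K" using cmp_arr[OF ps u1 K(2)] P_def by simp
  have a1: "cCmp ?C t1 \<alpha> \<in> arrs ?C i' K" using cmp_arr[OF ps al K(2)] .
  have a2: "cCmp ?C t2 \<beta> \<in> arrs ?C i' K" using cmp_arr[OF ps be K(3)] .
  have S2: "f (pTr G P x \<otimes>\<^bsub>grp i\<^esub> pTr G P y) = f' (pTr G (cCmp ?C t1 \<alpha>) x) + f' (pTr G (cCmp ?C t2 \<beta>) y)"
    if "x \<in> pFib G K" "y \<in> pFib G K" for x y
  proof -
    have "pTr G P x = pTr G u1 (pTr G t1 x)" using P_def tr_cmp[OF ps u1 K(2) that(1)] by simp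
    moreover have "pTr G P y = pTr G u2 (pTr G t2 y)" using P_def eqP tr_cmp[OF ps u2 K(3) that(2)] by simp
    moreover have "pTr G (cCmp ?C t1 \<alpha>) x = pTr G \<alpha> (pTr G t1 x)" using tr_cmp[OF ps al K(2) that(1)] .
    moreover have "pTr G (cCmp ?C t2 \<beta>) y = pTr G \<beta> (pTr G t2 y)" using tr_cmp[OF ps be K(3) that(2)] .
    moreover have "pTr G t1 x \<in> pFib G k1" "pTr G t2 y \<in> pFib G k2"
      using tr_in[OF ps K(2) that(1)] tr_in[OF ps K(3) that(2)] by auto
    ultimately show ?thesis using E by simp
  qed
  obtain K' w where K': "K' \<in> cOb ?C" "w \<in> arrs ?C K K'"
      and eqQ: "cCmp ?C w (cCmp ?C t1 \<alpha>) = cCmp ?C w (cCmp ?C t2 \<beta>)"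
    using eqz[OF ps a1 a2] by blast
  define P' where "P' = cCmp ?C w P"
  define Q where "Q = cCmp ?C w (cCmp ?C t1 \<alpha>)"
  have P': "P' \<in> arrs ?C i K'" using cmp_arr[OF ps P K'(2)] P'_def by simp
  have Q: "Q \<in> arrs ?C i' K'" using cmp_arr[OF ps a1 K'(2)] Q_def by simp
  have S3: "f (pTr G P' x \<otimes>\<^bsub>grp i\<^esub> pTr G P' y) = f' (pTr G Q x) + f' (pTr G Q y)"
    if "x \<in> pFib G K'" "y \<in> pFib G K'" for x y
  proof -
    have "pTr G P' x = pTr G P (pTr G w x)" "pTr G P' y = pTr G P (pTr G w y)"
      using P'_def tr_cmp[OF ps P K'(2)] that by auto
    moreover have "pTr G Q x = pTr G (cCmp ?C t1 \<alpha>) (pTr G w x)"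
      using Q_def tr_cmp[OF ps a1 K'(2) that(1)] by simp
    moreover have "pTr G Q y = pTr G (cCmp ?C t2 \<beta>) (pTr G w y)"
      using Q_def eqQ tr_cmp[OF ps a2 K'(2) that(2)] by simp
    moreover have "pTr G w x \<in> pFib G K" "pTr G w y \<in> pFib G K"
      using tr_in[OF ps K'(2)] that by auto
    ultimately show ?thesis using S2 by simp
  qed
  obtain K'' z z' where K'': "K'' \<in> cOb ?C" "z \<in> arrs ?C K' K''" "z' \<in> arrs ?C k3 K''"
      and eqR: "cCmp ?C z Q = cCmp ?C z' r"
    using join[OF ps Q r] by blast
  have b1: "cCmp ?C z P' \<in> arrs ?C i K''" using cmp_arr[OF ps P' K''(2)] .
  have b2: "cCmp ?C z' s \<in> arrs ?C i K''" using cmp_arr[OF ps s K''(3)] .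
  obtain K3 w' where K3: "K3 \<in> cOb ?C" "w' \<in> arrs ?C K'' K3"
      and eqS: "cCmp ?C w' (cCmp ?C z P') = cCmp ?C w' (cCmp ?C z' s)"
    using eqz[OF ps b1 b2] by blast
  define P3 where "P3 = cCmp ?C w' (cCmp ?C z P')"
  have P3: "P3 \<in> arrs ?C i K3" using cmp_arr[OF ps b1 K3(2)] P3_def by simp
  define F where "F = (\<lambda>x. f (pTr G P3 x))"
  have FQ: "f' (pTr G Q (pTr G z (pTr G w' x))) = F x" if "x \<in> pFib G K3" for x
  proof -
    have x1: "pTr G w' x \<in> pFib G K''" using tr_in[OF ps K3(2) that] .
    have "pTr G Q (pTr G z (pTr G w' x)) = pTr G (cCmp ?C z Q) (pTr G w' x)"
      using tr_cmp[OF ps Q K''(2) x1] by simp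
    also have "\<dots> = pTr G r (pTr G z' (pTr G w' x))" using eqR tr_cmp[OF ps r K''(3) x1] by simp
    finally have "f' (pTr G Q (pTr G z (pTr G w' x))) = f (pTr G s (pTr G z' (pTr G w' x)))"
      using R tr_in[OF ps K''(3) x1] by simp
    also have "pTr G s (pTr G z' (pTr G w' x)) = pTr G (cCmp ?C z' s) (pTr G w' x)"
      using tr_cmp[OF ps s K''(3) x1] by simp
    also have "\<dots> = pTr G P3 x" using P3_def eqS tr_cmp[OF ps b2 K3(2) that] by simp
    finally show ?thesis by (simp add: F_def)
  qed
  have P3x: "pTr G P3 x = pTr G P' (pTr G z (pTr G w' x))" if "x \<in> pFib G K3" for x
  proof -
    have x1: "pTr G w' x \<in> pFib G K''" using tr_in[OF ps K3(2) that] .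
    show ?thesis using P3_def tr_cmp[OF ps b1 K3(2) that] tr_cmp[OF ps P' K''(2) x1] by simp
  qed
  have grp: "group (grp K3)" "carrier (grp K3) = pFib G K3" using G K3(1) by (auto simp: pro_group_def)
  have addF: "F (x \<otimes>\<^bsub>grp K3\<^esub> y) = F x + F y" if "x \<in> carrier (grp K3)" "y \<in> carrier (grp K3)" for x y
  proof -
    have xy: "x \<in> pFib G K3" "y \<in> pFib G K3" using that grp by auto
    have x2: "pTr G z (pTr G w' x) \<in> pFib G K'" "pTr G z (pTr G w' y) \<in> pFib G K'"
      using tr_in[OF ps K''(2)] tr_in[OF ps K3(2)] xy by auto
    have "F (x \<otimes>\<^bsub>grp K3\<^esub> y) = f (pTr G P3 x \<otimes>\<^bsub>grp i\<^esub> pTr G P3 y)"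
      using tr_mult[OF G P3 xy] by (simp add: F_def)
    also have "\<dots> = f' (pTr G Q (pTr G z (pTr G w' x))) + f' (pTr G Q (pTr G z (pTr G w' y)))"
      using P3x xy S3[OF x2] by simp
    also have "\<dots> = F x + F y" using FQ xy by simp
    finally show ?thesis .
  qed
  have bd: "\<bar>F x\<bar> < B" if "x \<in> carrier (grp K3)" for x
    using fb tr_in[OF ps P3] that grp by (auto simp: F_def)
  have "\<forall>x\<in>pFib G K3. f (pTr G P3 x) = 0"
    using bounded_hom_zero[OF grp(1) addF bd] grp by (auto simp: F_def)
  then show ?thesis using K3 P3 by blast
qed

lemma nat_cat_simps[simp]: "cAr nat_pos_cat = {(m, n). 1 \<le> m \<and> m \<le> n}" "cDom nat_pos_cat = fst" "cCod nat_pos_cat = snd"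
  by (simp_all add: nat_pos_cat_def)

lemma hom_triv_level:
  assumes G: "pro_group G grp" and H: "grp_obj_hom G (pg_mult grp) realX realX_add \<phi>" and n: "1 \<le> n"
  shows "\<exists>K P. K \<in> cOb (pIdx G) \<and> P \<in> arrs (pIdx G) (fst (\<phi> n)) K \<and> (\<forall>x\<in>pFib G K. snd (\<phi> n) (pTr G P x) = 0)"
proof -
  let ?C = "pIdx G"
  have ps: "pro_set G" using G by (simp add: pro_group_def)
  have hom: "pro_hom G realX \<phi>" and eqm: "pro_eq (pro_prod G G) realX (pro_comp \<phi> (pg_mult grp)) (pro_comp realX_add (pro_prod_map G G \<phi> \<phi>))"
    using H by (auto simp: grp_obj_hom_def)
  define i where "i = fst (\<phi> n)"
  define f where "f = snd (\<phi> n)"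
  define i' where "i' = fst (\<phi> (2*n))"
  define f' where "f' = snd (\<phi> (2*n))"
  have i: "i \<in> cOb ?C" and fm: "f \<in> pFib G i \<rightarrow> {-1 / real n <..< 1 / real n}"
    using hom n unfolding pro_hom_def i_def f_def by auto
  have i': "i' \<in> cOb ?C" using hom n unfolding pro_hom_def i'_def by auto
  have fb: "\<forall>x\<in>pFib G i. \<bar>f x\<bar> < 1 / real n" using fm by (auto simp: Pi_def abs_less_iff)
  have "germ_eq G (i', f') (i, f)"
    using hom n unfolding pro_hom_def i_def f_def i'_def f'_def
    by (drule_tac conjunct2, drule_tac x="(n, 2*n)" in bspec) auto
  then obtain k3 r s where r: "r \<in> arrs ?C i' k3" and s: "s \<in> arrs ?C i k3"
      and R: "\<forall>x\<in>pFib G k3. f' (pTr G r x) = f (pTr G s x)"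
    unfolding germ_eq_def by auto
  define s0 where "s0 = (SOME j. j \<in> cOb ?C)"
  have s0: "s0 \<in> cOb ?C" using i s0_def by (metis someI)
  have dir: "directed (pIdx (pro_prod G G))"
    using ps by (simp add: directed_prod filtered_directed pro_set_def)
  have f1: "fst (pro_comp \<phi> (pro_fst G G) (2*n)) = (i', s0)"
    by (simp add: pro_comp_def pro_fst_def i'_def s0_def)
  have f2: "fst (pro_comp \<phi> (pro_snd G G) (2*n)) = (s0, i')"
    by (simp add: pro_comp_def pro_snd_def i'_def s0_def)
  obtain c where c: "pro_prod_map G G \<phi> \<phi> (2*n, 2*n) = (fst c, \<lambda>z. (snd (pro_comp \<phi> (pro_fst G G) (2*n)) (pTr (pro_prod G G) (fst (snd c)) z),
        snd (pro_comp \<phi> (pro_snd G G) (2*n)) (pTr (pro_prod G G) (snd (snd c)) z)))"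
     and c0: "fst c \<in> cOb (pIdx (pro_prod G G))"
     and ca: "fst (snd c) \<in> arrs (pIdx (pro_prod G G)) (i', s0) (fst c)"
     and cb: "snd (snd c) \<in> arrs (pIdx (pro_prod G G)) (s0, i') (fst c)"
    using pair_spec[OF dir, of "pro_comp \<phi> (pro_fst G G)" "2*n" "pro_comp \<phi> (pro_snd G G)" "2*n"]
      f1 f2 i' s0 unfolding pro_prod_map_def by auto
  obtain c1 c2 a1 a2 b1 b2 where cc: "c = ((c1, c2), (a1, a2), (b1, b2))" by (metis prod.collapse)
  have a1: "a1 \<in> arrs ?C i' c1" and b2: "b2 \<in> arrs ?C i' c2"
    using ca cb by (auto simp: cc arrs_prod)
  have "germ_eq (pro_prod G G) (pro_comp \<phi> (pg_mult grp) n) (pro_comp realX_add (pro_prod_map G G \<phi> \<phi>) n)"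
    using eqm n by (auto simp: pro_eq_def)
  then have "germ_eq (pro_prod G G) ((i, i), \<lambda>p. f (fst p \<otimes>\<^bsub>grp i\<^esub> snd p))
      ((c1, c2), \<lambda>z. f' (pTr G a1 (fst z)) + f' (pTr G b2 (snd z)))"
    by (simp add: pro_comp_def pg_mult_def realX_add_def c cc pro_fst_def pro_snd_def i_def f_def f'_def comp_def)
  then obtain k1 k2 u1 u2 v1 v2 where u1: "u1 \<in> arrs ?C i k1" and u2: "u2 \<in> arrs ?C i k2"
     and v1: "v1 \<in> arrs ?C c1 k1" and v2: "v2 \<in> arrs ?C c2 k2"
     and E0: "\<forall>g\<in>pFib G k1. \<forall>h\<in>pFib G k2. f (pTr G u1 g \<otimes>\<^bsub>grp i\<^esub> pTr G u2 h) = f' (pTr G a1 (pTr G v1 g)) + f' (pTr G b2 (pTr G v2 h))"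
    unfolding germ_eq_def by (auto simp: arrs_prod)
  have al: "cCmp ?C v1 a1 \<in> arrs ?C i' k1" using cmp_arr[OF ps a1 v1] .
  have be: "cCmp ?C v2 b2 \<in> arrs ?C i' k2" using cmp_arr[OF ps b2 v2] .
  have E: "\<forall>g\<in>pFib G k1. \<forall>h\<in>pFib G k2. f (pTr G u1 g \<otimes>\<^bsub>grp i\<^esub> pTr G u2 h) = f' (pTr G (cCmp ?C v1 a1) g) + f' (pTr G (cCmp ?C v2 b2) h)"
    using E0 tr_cmp[OF ps a1 v1] tr_cmp[OF ps b2 v2] by simp
  show ?thesis using core[OF G fb u1 u2 al be E r s R] unfolding i_def f_def by blast
qed

lemma hom_triv:
  assumes G: "pro_group G grp" and H: "grp_obj_hom G (pg_mult grp) realX realX_add \<phi>"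
  shows "pro_eq G realX \<phi> (pro_comp realX_zero (pro_bang G))"
  unfolding pro_eq_def
proof
  fix j assume "j \<in> cOb (pIdx realX)"
  then have j: "1 \<le> j" by simp
  have ps: "pro_set G" using G by (simp add: pro_group_def)
  obtain K P where K: "K \<in> cOb (pIdx G)" and P: "P \<in> arrs (pIdx G) (fst (\<phi> j)) K"
     and Z: "\<forall>x\<in>pFib G K. snd (\<phi> j) (pTr G P x) = 0"
    using hom_triv_level[OF G H j] by blast
  define i0 where "i0 = (SOME i. i \<in> cOb (pIdx G))"
  have i0: "i0 \<in> cOb (pIdx G)" using K i0_def by (metis someI)
  obtain K4 t q where K4: "K4 \<in> cOb (pIdx G)" "t \<in> arrs (pIdx G) K K4" "q \<in> arrs (pIdx G) i0 K4"
    using ub[OF ps K i0] by blast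
  have tP: "cCmp (pIdx G) t P \<in> arrs (pIdx G) (fst (\<phi> j)) K4" using cmp_arr[OF ps P K4(2)] .
  have "\<forall>x\<in>pFib G K4. snd (\<phi> j) (pTr G (cCmp (pIdx G) t P) x) = 0"
    using tr_cmp[OF ps P K4(2)] tr_in[OF ps K4(2)] Z by simp
  then have "germ_eq G (\<phi> j) (i0, \<lambda>_. 0)"
    unfolding germ_eq_def using K4 tP by fastforce
  then show "germ_eq G (\<phi> j) (pro_comp realX_zero (pro_bang G) j)"
    by (simp add: pro_comp_def realX_zero_def pro_bang_def i0_def comp_def)
qed

lemma fib_mono: "1 \<le> a \<Longrightarrow> a \<le> k \<Longrightarrow> x \<in> pFib realX k \<Longrightarrow> x \<in> pFib realX a"
  using inv_le[of a k] by auto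

lemma no_iso:
  assumes G: "pro_group G grp"
  shows "\<not> grp_obj_iso G (pg_mult grp) realX realX_add"
proof
  assume "grp_obj_iso G (pg_mult grp) realX realX_add"
  then obtain \<phi> \<psi> where H: "grp_obj_hom G (pg_mult grp) realX realX_add \<phi>"
     and H2: "grp_obj_hom realX realX_add G (pg_mult grp) \<psi>"
     and I: "pro_eq realX realX (pro_comp \<phi> \<psi>) pro_id"
    unfolding grp_obj_iso_def by blast
  have ps: "pro_set G" using G by (simp add: pro_group_def)
  have hom2: "pro_hom realX G \<psi>" using H2 by (simp add: grp_obj_hom_def)
  define i where "i = fst (\<phi> 1)"
  define f where "f = snd (\<phi> 1)"
  obtain K P where K: "K \<in> cOb (pIdx G)" and P: "P \<in> arrs (pIdx G) i K"
     and Z: "\<forall>x\<in>pFib G K. f (pTr G P x) = 0"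
    using hom_triv_level[OF G H, of 1] unfolding i_def f_def by auto
  have Par: "P \<in> cAr (pIdx G)" "cDom (pIdx G) P = i" "cCod (pIdx G) P = K" using P by (auto simp: arrs_def)
  have gK: "snd (\<psi> K) \<in> pFib realX (fst (\<psi> K)) \<rightarrow> pFib G K" and mK: "1 \<le> fst (\<psi> K)"
    using hom2 K unfolding pro_hom_def by auto
  have "germ_eq realX (fst (\<psi> K), pTr G P \<circ> snd (\<psi> K)) (\<psi> i)"
    using hom2 Par unfolding pro_hom_def by metis
  then obtain k1 where k1: "fst (\<psi> K) \<le> k1" "1 \<le> fst (\<psi> K)" "fst (\<psi> i) \<le> k1" "1 \<le> fst (\<psi> i)"
      and E1: "\<forall>x\<in>pFib realX k1. pTr G P (snd (\<psi> K) x) = snd (\<psi> i) x"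
    unfolding germ_eq_def by (auto simp: arrs_nat split: if_splits)
  have "germ_eq realX (pro_comp \<phi> \<psi> 1) (pro_id 1)" using I by (simp add: pro_eq_def)
  then obtain k2 where k2: "1 \<le> k2" and E2: "\<forall>x\<in>pFib realX k2. f (snd (\<psi> i) x) = x"
    unfolding germ_eq_def by (auto simp: arrs_nat pro_comp_def pro_id_def i_def f_def split: if_splits)
  define k where "k = max k1 k2"
  have k: "1 \<le> k" "k1 \<le> k" "k2 \<le> k" "fst (\<psi> K) \<le> k" using k1 k2 k_def by auto
  define x :: real where "x = 1 / (2 * real k)"
  have x: "x \<in> pFib realX k" "x \<noteq> 0" using k(1) by (auto simp: x_def field_simps)
  have x1: "x \<in> pFib realX k1" using fib_mono[OF _ k(2) x(1)] k1 by linarith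
  have x2: "x \<in> pFib realX k2" using fib_mono[OF k2 k(3) x(1)] .
  have xK: "x \<in> pFib realX (fst (\<psi> K))" using fib_mono[OF mK k(4) x(1)] .
  have "snd (\<psi> K) x \<in> pFib G K" using gK xK by auto
  then have "f (snd (\<psi> i) x) = 0" using Z E1 x1 by metis
  then show False using E2 x2 x(2) by simp
qed

theorem mainTheorem15:
  shows "abelian_group_obj realX realX_zero realX_neg realX_add
    \<and> \<not> (\<exists>\<phi> \<psi>. pro_hom realX pro_one \<phi> \<and> pro_hom pro_one realX \<psi>
            \<and> pro_eq realX realX (pro_comp \<psi> \<phi>) pro_id
            \<and> pro_eq pro_one pro_one (pro_comp \<phi> \<psi>) pro_id)
    \<and> (\<forall>(G :: ('o, 'a, 'g) proset) grp \<phi>.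
          pro_group G grp \<and> grp_obj_hom G (pg_mult grp) realX realX_add \<phi>
          \<longrightarrow> pro_eq G realX \<phi> (pro_comp realX_zero (pro_bang G)))
    \<and> (\<forall>(G :: ('o, 'a, 'g) proset) grp.
          pro_group G grp \<longrightarrow> \<not> grp_obj_iso G (pg_mult grp) realX realX_add)"
  using ab_realX not_triv hom_triv no_iso by blast

end
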